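(* If $n$ is a positive integer, then $$\sum_{k = 1}^n \sum_{j = 0}^{k - 1} \frac{( - 1)^{n - j} ( n - j)!}{( n - j + 1)( k - j)}\left\{ {n \atop n - j} \right\} = - \frac{n}{2}B_{n - 1} .$$
   Context: $\left\{ {n \atop m} \right\}$ denotes the Stirling number of the second kind. $B_n$ are the Bernoulli numbers, defined by $\frac{t}{e^t-1}=\sum_{n\ge0}B_n\frac{t^n}{n!}$ (so $B_0=1$, $B_1=-1/2$). *)

theory Defs
  imports "HOL-Combinatorics.Stirling" "HOL-Computational_Algebra.Formal_Power_Series"
begin

text \<open>Bernoulli numbers via the exponential generating function
  t / (e^t - 1) = sum_n B_n t^n / n!, so B_0 = 1, B_1 = -1/2.
  Formal power series division: fps_X / (fps_exp 1 - 1).\<close>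
definition bernoulli :: "nat \<Rightarrow> real" where
  "bernoulli n = fact n * fps_nth (fps_X / (fps_exp 1 - 1)) n"

end

theory Submission imports Defs begin

definition T :: "(nat \<Rightarrow> real) \<Rightarrow> nat \<Rightarrow> real" where
  "T c n = (\<Sum>p\<le>n. (-1)^p * fact p * real (Stirling n p) * c p)"

definition H :: "nat \<Rightarrow> real" where "H q = (\<Sum>i=1..q. 1 / real i)"

lemma H_0 [simp]: "H 0 = 0" by (simp add: H_def)
lemma H_Suc: "H (Suc q) = H q + 1 / real (Suc q)" by (simp add: H_def)

lemma T_Suc: "T c (Suc n) = T (\<lambda>p. real p * c p - real (p+1) * c (p+1)) n"
proof -
  let ?g = "\<lambda>p. (-1)^p * fact p * real (Stirling n p) * (real p * c p)"
  let ?h = "\<lambda>p. (-1)^p * fact p * real (Stirling n p) * (real (p+1) * c (p+1)) :: real"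
  have "T c (Suc n) = (\<Sum>p\<le>n. (-1)^(Suc p) * fact (Suc p) * real (Stirling (Suc n) (Suc p)) * c (Suc p))"
    unfolding T_def by (subst sum.atMost_Suc_shift) simp
  also have "\<dots> = (\<Sum>p\<le>n. ?g (Suc p) - ?h p)"
    by (rule sum.cong) (simp_all add: algebra_simps)
  also have "\<dots> = (\<Sum>p\<le>n. ?g (Suc p)) - (\<Sum>p\<le>n. ?h p)"
    by (simp add: sum_subtractf)
  also have "(\<Sum>p\<le>n. ?g (Suc p)) = (\<Sum>p\<le>Suc n. ?g p)"
    by (subst sum.atMost_Suc_shift) simp
  also have "\<dots> = (\<Sum>p\<le>n. ?g p)" by simp
  finally show ?thesis unfolding T_def by (simp add: sum_subtractf[symmetric] algebra_simps)
qed

lemma T_scale: "T (\<lambda>p. a * c p) n = a * T c n"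
  unfolding T_def by (simp add: sum_distrib_left algebra_simps)

lemma T_const0: "T (\<lambda>p. if p = 0 then a else 0) n = (if n = 0 then a else 0)"
proof -
  have "T (\<lambda>p. if p = 0 then a else 0) n = (\<Sum>p\<le>n. if p = 0 then real (Stirling n 0) * a else 0)"
    unfolding T_def by (rule sum.cong) auto
  also have "\<dots> = real (Stirling n 0) * a" by (simp add: sum.delta)
  finally show ?thesis by (cases n) auto
qed

lemma Tf: "T (\<lambda>p. 1 / real p) n = (if n = 1 then -1 else 0)"
proof (cases n)
  case 0 then show ?thesis by (simp add: T_def)
next
  case (Suc m)
  have "(\<lambda>p. real p * (1 / real p) - real (p+1) * (1 / real (p+1))) = (\<lambda>p. if p = 0 then -1 else 0)"
    by (rule ext) auto
  then show ?thesis using Suc by (simp add: T_Suc T_const0)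
qed

lemma Te: "T (\<lambda>p. H (p-1) / real p) n = (if n = 2 then 1 else 0)"
proof (cases n)
  case 0 then show ?thesis by (simp add: T_def)
next
  case (Suc m)
  have "(\<lambda>p. real p * (H (p-1) / real p) - real (p+1) * (H (p+1-1) / real (p+1))) = (\<lambda>p. (-1) * (1 / real p))"
  proof (rule ext)
    fix p show "real p * (H (p-1) / real p) - real (p+1) * (H (p+1-1) / real (p+1)) = (-1) * (1 / real p)"
      by (cases p) (auto simp: H_Suc)
  qed
  then have "T (\<lambda>p. H (p-1) / real p) (Suc m) = T (\<lambda>p. (-1) * (1 / real p)) m"
    unfolding T_Suc by (rule arg_cong)
  then show ?thesis using Suc T_scale[of "-1" "\<lambda>p. 1 / real p" m] Tf[of m] by simp
qed

lemma Stirling_binom: "(\<Sum>k\<le>n. (n choose k) * Stirling k m) = Stirling (Suc n) (Suc m)"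
proof (induction n arbitrary: m)
  case 0
  then show ?case by (cases m) auto
next
  case (Suc n)
  have a: "(\<Sum>k\<le>n. (n choose k) * Stirling (Suc k) m) = m * Stirling (Suc n) (Suc m) + Stirling (Suc n) m" for m
  proof (cases m)
    case 0 then show ?thesis by simp
  next
    case (Suc m')
    have "(\<Sum>k\<le>n. (n choose k) * Stirling (Suc k) m) = Suc m' * (\<Sum>k\<le>n. (n choose k) * Stirling k (Suc m')) + (\<Sum>k\<le>n. (n choose k) * Stirling k m')"
      by (simp add: Suc sum_distrib_left sum.distrib algebra_simps)
    then show ?thesis using Suc.IH Suc by simp
  qed
  have e1: "(\<Sum>k\<le>Suc n. (Suc n choose k) * Stirling k m) = Stirling 0 m + (\<Sum>k\<le>n. (n choose k) * Stirling (Suc k) m) + (\<Sum>k\<le>n. (n choose Suc k) * Stirling (Suc k) m)"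
    by (subst sum.atMost_Suc_shift) (simp add: sum.distrib algebra_simps)
  have e2: "(\<Sum>k\<le>n. (n choose Suc k) * Stirling (Suc k) m) + Stirling 0 m = (\<Sum>k\<le>Suc n. (n choose k) * Stirling k m)"
    by (subst sum.atMost_Suc_shift) simp
  have e3: "(\<Sum>k\<le>Suc n. (n choose k) * Stirling k m) = Stirling (Suc n) (Suc m)"
    using Suc.IH[of m] by simp
  have "(\<Sum>k\<le>Suc n. (Suc n choose k) * Stirling k m) = (\<Sum>k\<le>n. (n choose k) * Stirling (Suc k) m) + Stirling (Suc n) (Suc m)"
    using e1 e2 e3 by linarith
  then show ?case using a by simp
qed

lemma T_ext: "n \<le> N \<Longrightarrow> T c n = (\<Sum>p\<le>N. (-1)^p * fact p * real (Stirling n p) * c p)"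
  unfolding T_def by (rule sum.mono_neutral_left) auto

lemma Stirling_binom_lt:
  "(\<Sum>k<n. real (n choose k) * real (Stirling k p)) = real (Suc p) * real (Stirling n (Suc p))"
proof -
  have "(\<Sum>k<n. (n choose k) * Stirling k p) + Stirling n p = Suc p * Stirling n (Suc p) + Stirling n p"
    using Stirling_binom[of n p] by (simp add: lessThan_Suc_atMost[symmetric])
  then have "(\<Sum>k<n. (n choose k) * Stirling k p) = Suc p * Stirling n (Suc p)" by simp
  then have "real (\<Sum>k<n. (n choose k) * Stirling k p) = real (Suc p * Stirling n (Suc p))" by simp
  then show ?thesis by (simp add: algebra_simps)
qed

lemma Arec: "(\<Sum>k<n. real (n choose k) * T (\<lambda>p. H p / real (p+1)) k) = (if n = 2 then -1 else 0)"
proof -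
  define c where "c = (\<lambda>p. H p / real (p+1))"
  define g where "g = (\<lambda>q. (-1)^q * fact q * real (Stirling n q) * (H (q-1) / real q) :: real)"
  have "(\<Sum>k<n. real (n choose k) * T c k)
      = (\<Sum>k<n. real (n choose k) * (\<Sum>p\<le>n. (-1)^p * fact p * real (Stirling k p) * c p))"
    by (rule sum.cong) (simp_all add: T_ext)
  also have "\<dots> = (\<Sum>k<n. \<Sum>p\<le>n. ((-1)^p * fact p * c p) * (real (n choose k) * real (Stirling k p)))"
    by (simp add: sum_distrib_left algebra_simps)
  also have "\<dots> = (\<Sum>p\<le>n. \<Sum>k<n. ((-1)^p * fact p * c p) * (real (n choose k) * real (Stirling k p)))"
    by (rule sum.swap)
  also have "\<dots> = (\<Sum>p\<le>n. ((-1)^p * fact p * c p) * (real (Suc p) * real (Stirling n (Suc p))))"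
    by (simp add: sum_distrib_left[symmetric] Stirling_binom_lt)
  also have "\<dots> = - (\<Sum>p\<le>n. g (Suc p))"
    by (simp add: sum_negf[symmetric] g_def c_def) (rule sum.cong, simp_all add: field_simps)
  also have "(\<Sum>p\<le>n. g (Suc p)) = (\<Sum>q\<le>Suc n. g q)"
    by (subst sum.atMost_Suc_shift) (simp add: g_def)
  also have "\<dots> = (\<Sum>q\<le>n. g q)" by (simp add: g_def)
  also have "\<dots> = T (\<lambda>p. H (p-1) / real p) n" by (simp add: T_def g_def)
  finally show ?thesis using Te[of n] by (simp add: c_def)
qed

lemma A_closed: "T (\<lambda>p. H p / real (p+1)) (Suc m) = - (real (Suc m) / 2) * bernoulli m"
proof -
  define A where "A = T (\<lambda>p. H p / real (p+1))"
  define Af where "Af = (Abs_fps (\<lambda>n. A n / fact n) :: real fps)"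
  define E1 where "E1 = (fps_exp 1 - 1 :: real fps)"
  define F where "F = fps_X / E1"
  have E1n: "fps_nth E1 j = (if j = 0 then 0 else 1 / fact j)" for j by (simp add: E1_def)
  have E1nz: "E1 \<noteq> 0"
  proof
    assume "E1 = 0" then have "fps_nth E1 1 = 0" by simp
    with E1n[of 1] show False by simp
  qed
  have "subdegree E1 \<le> 1" by (rule subdegree_leI) (simp add: E1n)
  then have FE: "F * E1 = fps_X" unfolding F_def by (intro fps_times_divide_eq E1nz) simp
  have AE: "Af * E1 = fps_const (-1/2) * fps_X^2"
  proof (rule fps_ext)
    fix n
    have "fps_nth (Af * E1) n = (\<Sum>i=0..n. A i / fact i * fps_nth E1 (n-i))" by (simp add: fps_mult_nth Af_def)
    also have "\<dots> = (\<Sum>i<Suc n. A i / fact i * fps_nth E1 (n-i))" by (simp add: atLeast0AtMost lessThan_Suc_atMost)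
    also have "\<dots> = (\<Sum>i<n. A i / fact i * fps_nth E1 (n-i))" by (simp add: E1n ac_simps)
    also have "\<dots> = (\<Sum>i<n. A i / fact i * (1 / fact (n-i)))" by (rule sum.cong) (simp_all add: E1n)
    also have "\<dots> = (\<Sum>i<n. real (n choose i) * A i) / fact n"
      unfolding sum_divide_distrib by (rule sum.cong) (simp_all add: binomial_fact field_simps ac_simps)
    also have "\<dots> = (if n = 2 then -1 else 0) / fact n" using Arec[of n] unfolding A_def by simp
    finally show "fps_nth (Af * E1) n = fps_nth (fps_const (-1/2) * fps_X^2) n" by (auto simp: numeral_2_eq_2)
  qed
  have GE: "(fps_const (-1/2) * fps_X * F) * E1 = fps_const (-1/2) * fps_X^2"
    using FE by (simp add: power2_eq_square mult.assoc)
  have "Af = fps_const (-1/2) * fps_X * F"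
    using AE GE E1nz by (metis mult_right_cancel)
  then have "fps_nth Af (Suc m) = fps_nth (fps_const (-1/2) * (fps_X * F)) (Suc m)" by (simp add: mult.assoc)
  then have 1: "A (Suc m) / fact (Suc m) = -1/2 * fps_nth F m" by (simp add: Af_def)
  have 2: "bernoulli m = fact m * fps_nth F m" by (simp add: bernoulli_def F_def E1_def)
  have 3: "A (Suc m) = -1/2 * fps_nth F m * fact (Suc m)"
    using 1 by (simp add: divide_eq_eq del: fact_Suc)
  show ?thesis unfolding A_def[symmetric] 3 2 by (simp add: algebra_simps)
qed

lemma swap_sum: fixes n :: nat and h :: "nat \<Rightarrow> real" shows "(\<Sum>k=1..n. \<Sum>j=0..k-1. h j / real (k-j)) = (\<Sum>j<n. h j * H (n-j))"
proof (induction n)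
  case 0 then show ?case by simp
next
  case (Suc n)
  have "(\<Sum>j<Suc n. h j * H (Suc n - j)) = (\<Sum>j<Suc n. h j * H (n-j) + h j / real (Suc n - j))"
    by (rule sum.cong) (simp_all add: Suc_diff_le H_Suc algebra_simps)
  also have "\<dots> = (\<Sum>j<Suc n. h j * H (n-j)) + (\<Sum>j<Suc n. h j / real (Suc n - j))"
    by (simp add: sum.distrib)
  also have "(\<Sum>j<Suc n. h j * H (n-j)) = (\<Sum>j<n. h j * H (n-j))" by simp
  also have "(\<Sum>j<Suc n. h j / real (Suc n - j)) = (\<Sum>j=0..n. h j / real (Suc n - j))"
    by (simp add: atLeast0AtMost lessThan_Suc_atMost)
  finally have r: "(\<Sum>j<Suc n. h j * H (Suc n - j)) = (\<Sum>j<n. h j * H (n-j)) + (\<Sum>j=0..n. h j / real (Suc n - j))" .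
  show ?case using Suc.IH r by simp
qed

lemma rev_sum: fixes n :: nat and g :: "nat \<Rightarrow> real" shows "(\<Sum>j<n. g (n-j)) = (\<Sum>m=1..n. g m)"
proof (induction n)
  case 0 then show ?case by simp
next
  case (Suc n) then show ?case by (subst sum.lessThan_Suc_shift) simp
qed

theorem proposition7:
  fixes n :: nat
  assumes "n \<ge> 1"
  shows "(\<Sum>k=1..n. \<Sum>j=0..k-1.
            (-1) ^ (n - j) * fact (n - j) / (real (n - j + 1) * real (k - j))
              * real (Stirling n (n - j)))
         = - (real n / 2) * bernoulli (n - 1)"
proof -
  define h where "h = (\<lambda>j. (-1) ^ (n - j) * fact (n - j) / real (n - j + 1) * real (Stirling n (n - j)) :: real)"
  define g where "g = (\<lambda>m. (-1) ^ m * fact m / real (m + 1) * real (Stirling n m) * H m :: real)"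
  have "(\<Sum>k=1..n. \<Sum>j=0..k-1.
            (-1) ^ (n - j) * fact (n - j) / (real (n - j + 1) * real (k - j))
              * real (Stirling n (n - j))) = (\<Sum>k=1..n. \<Sum>j=0..k-1. h j / real (k-j))"
    unfolding h_def by (intro sum.cong refl) (simp add: field_simps)
  also have "\<dots> = (\<Sum>j<n. h j * H (n-j))" by (rule swap_sum)
  also have "\<dots> = (\<Sum>j<n. g (n-j))" by (simp add: h_def g_def)
  also have "\<dots> = (\<Sum>m=1..n. g m)" by (rule rev_sum)
  also have "\<dots> = (\<Sum>m=0..n. g m)" by (simp add: sum.atLeast_Suc_atMost g_def)
  also have "\<dots> = T (\<lambda>p. H p / real (p+1)) n"
    unfolding T_def g_def atLeast0AtMost by (intro sum.cong refl) (simp add: field_simps)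
  also have "\<dots> = T (\<lambda>p. H p / real (p+1)) (Suc (n-1))" using assms by simp
  also have "\<dots> = - (real n / 2) * bernoulli (n - 1)" using assms A_closed[of "n-1"] by simp
  finally show ?thesis .
qed

end
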